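(* Let $0<a<1/2$, $a+1/2<b<1$, $K(n)\sim n^a$, $C_n=e^{n^{b-a}}$, and $$\mathcal F_n=\{(\theta_n,\rho):|\theta_{in}|\le C_n,\ i=1,\dots,K(n),\ |\rho|\le\log C_n\}.$$ With prior $p(\omega_n)=(2\pi\eta^2)^{-1/2}e^{-\rho^2/(2\eta^2)}\prod_{i=1}^{K(n)}(2\pi\zeta^2)^{-1/2}e^{-\theta_{in}^2/(2\zeta^2)}$ on $\omega_n=(\theta_n,\rho)$ (with $\eta,\zeta>0$ fixed), for every $\kappa>0$ we have $\int_{\mathcal F_n^c}p(\omega_n)d\omega_n\le e^{-n\kappa}$ for all sufficiently large $n$.
   Context: $\theta_n=(\theta_{1n},\dots,\theta_{K(n)n})\in\mathbb R^{K(n)}$ is the vector of network parameters and $\rho\in\mathbb R$ is the reparametrized scale parameter ($\sigma=\log(1+e^\rho)$); $K(n)\sim n^a$ means $K(n)$ grows at the rate $n^a$. *)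

theory Defs
  imports "HOL-Probability.Probability"
begin

definition param_space :: "nat \<Rightarrow> ((nat \<Rightarrow> real) \<times> real) measure" where
  "param_space K = (PiM {..<K} (\<lambda>_. lborel)) \<Otimes>\<^sub>M lborel"

definition prior_density :: "nat \<Rightarrow> real \<Rightarrow> real \<Rightarrow> (nat \<Rightarrow> real) \<times> real \<Rightarrow> real" where
  "prior_density K \<eta> \<zeta> \<omega> =
     normal_density 0 \<eta> (snd \<omega>) * (\<Prod>i<K. normal_density 0 \<zeta> (fst \<omega> i))"

definition C_seq :: "real \<Rightarrow> real \<Rightarrow> nat \<Rightarrow> real" where
  "C_seq a b n = exp (real n powr (b - a))"

definition sieve :: "real \<Rightarrow> real \<Rightarrow> nat \<Rightarrow> nat \<Rightarrow> ((nat \<Rightarrow> real) \<times> real) set" where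
  "sieve a b K n = {(\<theta>, \<rho>). (\<forall>i<K. \<bar>\<theta> i\<bar> \<le> C_seq a b n) \<and> \<bar>\<rho>\<bar> \<le> ln (C_seq a b n)}"

end

theory Submission
  imports Defs
begin

lemma nd_wide:
  assumes "s > 0"
  shows "normal_density 0 s x = sqrt 2 * exp (- (x^2) / (4 * s^2)) * normal_density 0 (sqrt 2 * s) x"
proof -
  have e0: "x^2 / (4 * s^2) + x^2 / (4 * s^2) = x^2 / (2 * s^2)" using assms
    by (simp add: field_simps)
  have e: "exp (- (x^2) / (2 * s^2)) = exp (- (x^2) / (4 * s^2)) * exp (- (x^2) / (4 * s^2))"
  proof -
    have "- (x^2) / (4 * s^2) + - (x^2) / (4 * s^2) = - (x^2) / (2 * s^2)"
      using e0 by (metis add_divide_distrib minus_add_distrib minus_divide_left)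
    then show ?thesis by (metis exp_add)
  qed
  have q: "(sqrt 2 * s)^2 = 2 * s^2" by (simp add: power_mult_distrib)
  have r: "sqrt (2 * pi * (2 * s^2)) = sqrt 2 * sqrt (2 * pi * s^2)"
    by (metis mult.left_commute real_sqrt_mult)
  have q4: "2 * (2 * s^2) = 4 * s^2" by simp
  have p: "sqrt 2 * sqrt (2 * pi * s^2) > 0" using assms by simp
  let ?A = "sqrt (2 * pi * s^2)" and ?E = "exp (- (x^2) / (4 * s^2))"
  have n1: "normal_density 0 s x = 1 / ?A * exp (- (x^2) / (2 * s^2))"
    unfolding normal_density_def by simp
  have n2: "normal_density 0 (sqrt 2 * s) x = 1 / (sqrt 2 * ?A) * ?E"
    unfolding normal_density_def q r q4 diff_zero by simp
  have "sqrt 2 * ?E * (1 / (sqrt 2 * ?A) * ?E) = (sqrt 2 / sqrt 2) * (1 / ?A) * ?E * ?E"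
    by simp
  also have "\<dots> = 1 / ?A * ?E * ?E" by simp
  finally show ?thesis unfolding n1 n2 e by simp
qed

lemma nd_le_wide:
  assumes "s > 0"
  shows "normal_density 0 s x \<le> sqrt 2 * normal_density 0 (sqrt 2 * s) x"
proof -
  have "exp (- (x^2) / (4 * s^2)) \<le> 1" using assms by simp
  then show ?thesis unfolding nd_wide[OF assms, of x]
    by (intro mult_right_mono) (auto intro: mult_left_le)
qed

lemma nd_tail:
  assumes "0 < s" "s \<le> S" "0 \<le> T" "T \<le> \<bar>x\<bar>"
  shows "normal_density 0 s x \<le> sqrt 2 * exp (- (T^2) / (4 * S^2)) * normal_density 0 (sqrt 2 * s) x"
proof -
  have "T^2 \<le> x^2" using assms by (metis abs_le_square_iff abs_of_nonneg)
  have "T^2 / (4 * S^2) \<le> x^2 / (4 * s^2)"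
  proof -
    have "T^2 / (4 * S^2) \<le> T^2 / (4 * s^2)" using assms
      by (intro divide_left_mono) (auto intro!: power_mono)
    also have "\<dots> \<le> x^2 / (4 * s^2)" using \<open>T^2 \<le> x^2\<close> assms by (intro divide_right_mono) auto
    finally show ?thesis .
  qed
  then have "exp (- (x^2) / (4 * s^2)) \<le> exp (- (T^2) / (4 * S^2))" by simp
  then show ?thesis unfolding nd_wide[OF assms(1), of x]
    by (intro mult_right_mono mult_left_mono) auto
qed

lemma nn_nd: "s > 0 \<Longrightarrow> (\<integral>\<^sup>+ x. ennreal (normal_density 0 s x) \<partial>lborel) = 1"
  by (subst nn_integral_eq_integral) auto

lemma nn_prod_nd:
  fixes K :: nat
  assumes "s > 0"
  shows "(\<integral>\<^sup>+ \<theta>. ennreal (\<Prod>i<K. normal_density 0 s (\<theta> i)) \<partial>(PiM {..<K} (\<lambda>_. lborel))) = 1"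
proof -
  interpret product_sigma_finite "\<lambda>_::nat. lborel" by standard
  have "(\<integral>\<^sup>+ \<theta>. ennreal (\<Prod>i<K. normal_density 0 s (\<theta> i)) \<partial>(PiM {..<K} (\<lambda>_. lborel)))
     = (\<integral>\<^sup>+ \<theta>. (\<Prod>i<K. ennreal (normal_density 0 s (\<theta> i))) \<partial>(PiM {..<K} (\<lambda>_. lborel)))"
    by (simp add: prod_ennreal)
  also have "\<dots> = (\<Prod>i<K. \<integral>\<^sup>+ x. ennreal (normal_density 0 s x) \<partial>lborel)"
    using product_nn_integral_prod[of "{..<K}" "\<lambda>i x. ennreal (normal_density 0 s x)"] by simp
  also have "\<dots> = 1" using nn_nd[OF assms] by simp
  finally show ?thesis .
qed

lemma nn_g:
  fixes K :: nat
  assumes "s1 > 0" "s2 > 0"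
  shows "(\<integral>\<^sup>+ \<omega>. ennreal (normal_density 0 s1 (snd \<omega>) * (\<Prod>i<K. normal_density 0 s2 (fst \<omega> i)))
     \<partial>(PiM {..<K} (\<lambda>_. lborel) \<Otimes>\<^sub>M lborel)) = 1"
proof -
  have "(\<integral>\<^sup>+ \<omega>. ennreal (normal_density 0 s1 (snd \<omega>) * (\<Prod>i<K. normal_density 0 s2 (fst \<omega> i)))
     \<partial>(PiM {..<K} (\<lambda>_. lborel) \<Otimes>\<^sub>M lborel)) =
    (\<integral>\<^sup>+ \<theta>. \<integral>\<^sup>+ r. ennreal (normal_density 0 s1 r * (\<Prod>i<K. normal_density 0 s2 (\<theta> i))) \<partial>lborel
       \<partial>(PiM {..<K} (\<lambda>_. lborel)))"
    by (subst lborel.nn_integral_fst[symmetric]) auto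
  also have "\<dots> = (\<integral>\<^sup>+ \<theta>. ennreal (\<Prod>i<K. normal_density 0 s2 (\<theta> i)) \<partial>(PiM {..<K} (\<lambda>_. lborel)))"
  proof (rule nn_integral_cong)
    fix \<theta> :: "nat \<Rightarrow> real"
    have "(\<integral>\<^sup>+ r. ennreal (normal_density 0 s1 r * (\<Prod>i<K. normal_density 0 s2 (\<theta> i))) \<partial>lborel)
       = (\<integral>\<^sup>+ r. ennreal (normal_density 0 s1 r) * ennreal (\<Prod>i<K. normal_density 0 s2 (\<theta> i)) \<partial>lborel)"
      by (simp add: ennreal_mult prod_nonneg)
    also have "\<dots> = (\<integral>\<^sup>+ r. ennreal (normal_density 0 s1 r) \<partial>lborel) * ennreal (\<Prod>i<K. normal_density 0 s2 (\<theta> i))"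
      by (rule nn_integral_multc) auto
    also have "\<dots> = ennreal (\<Prod>i<K. normal_density 0 s2 (\<theta> i))" using nn_nd[OF assms(1)] by simp
    finally show "(\<integral>\<^sup>+ r. ennreal (normal_density 0 s1 r * (\<Prod>i<K. normal_density 0 s2 (\<theta> i))) \<partial>lborel)
       = ennreal (\<Prod>i<K. normal_density 0 s2 (\<theta> i))" .
  qed
  also have "\<dots> = 1" by (rule nn_prod_nd[OF assms(2)])
  finally show ?thesis .
qed

lemma pointwise:
  fixes k :: nat and \<theta> :: "nat \<Rightarrow> real" and \<rho> t \<eta> \<zeta> :: real
  assumes "\<eta> > 0" "\<zeta> > 0" "t \<ge> 0"
    and not: "\<not> ((\<forall>i<k. \<bar>\<theta> i\<bar> \<le> exp t) \<and> \<bar>\<rho>\<bar> \<le> t)"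
  shows "normal_density 0 \<eta> \<rho> * (\<Prod>i<k. normal_density 0 \<zeta> (\<theta> i))
    \<le> sqrt 2 ^ (k+1) * exp (- (t^2) / (4 * (max \<eta> \<zeta>)^2)) *
       (normal_density 0 (sqrt 2 * \<eta>) \<rho> * (\<Prod>i<k. normal_density 0 (sqrt 2 * \<zeta>) (\<theta> i)))"
proof -
  define E where "E = exp (- (t^2) / (4 * (max \<eta> \<zeta>)^2))"
  have E0: "0 \<le> E" "E \<le> 1" unfolding E_def by auto
  have texp: "t \<le> exp t" using exp_ge_add_one_self[of t] by linarith
  have prodh: "(\<Prod>j<k. (sqrt 2 * (if j = i then E else 1)) * normal_density 0 (sqrt 2 * \<zeta>) (\<theta> j))
      = sqrt 2 ^ k * (if i < k then E else 1) * (\<Prod>j<k. normal_density 0 (sqrt 2 * \<zeta>) (\<theta> j))" for i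
    by (simp add: prod.distrib prod.delta)
  show ?thesis
  proof (cases "\<bar>\<rho>\<bar> \<le> t")
    case True
    with not obtain i where i: "i < k" "\<bar>\<theta> i\<bar> > exp t" by auto
    have r: "normal_density 0 \<eta> \<rho> \<le> sqrt 2 * normal_density 0 (sqrt 2 * \<eta>) \<rho>"
      by (rule nd_le_wide[OF assms(1)])
    have p: "(\<Prod>j<k. normal_density 0 \<zeta> (\<theta> j)) \<le>
       (\<Prod>j<k. (sqrt 2 * (if j = i then E else 1)) * normal_density 0 (sqrt 2 * \<zeta>) (\<theta> j))"
    proof (rule prod_mono)
      fix j assume "j \<in> {..<k}"
      show "0 \<le> normal_density 0 \<zeta> (\<theta> j) \<and> normal_density 0 \<zeta> (\<theta> j) \<le>
          (sqrt 2 * (if j = i then E else 1)) * normal_density 0 (sqrt 2 * \<zeta>) (\<theta> j)"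
      proof (cases "j = i")
        case True
        have "normal_density 0 \<zeta> (\<theta> j) \<le> sqrt 2 * E * normal_density 0 (sqrt 2 * \<zeta>) (\<theta> j)"
          unfolding E_def using nd_tail[OF assms(2), of "max \<eta> \<zeta>" t "\<theta> j"] i True texp assms(3) by auto
        then show ?thesis using True by simp
      next
        case False
        then show ?thesis using nd_le_wide[OF assms(2)] by simp
      qed
    qed
    have "normal_density 0 \<eta> \<rho> * (\<Prod>i<k. normal_density 0 \<zeta> (\<theta> i)) \<le>
      (sqrt 2 * normal_density 0 (sqrt 2 * \<eta>) \<rho>) * (sqrt 2 ^ k * E * (\<Prod>j<k. normal_density 0 (sqrt 2 * \<zeta>) (\<theta> j)))"
      using mult_mono[OF r p] prodh[of i] i by (simp add: prod_nonneg)
    then show ?thesis unfolding E_def[symmetric] by (simp add: algebra_simps)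
  next
    case False
    have r: "normal_density 0 \<eta> \<rho> \<le> sqrt 2 * E * normal_density 0 (sqrt 2 * \<eta>) \<rho>"
      unfolding E_def using nd_tail[OF assms(1), of "max \<eta> \<zeta>" t \<rho>] False assms(3) by auto
    have p: "(\<Prod>j<k. normal_density 0 \<zeta> (\<theta> j)) \<le>
       (\<Prod>j<k. (sqrt 2 * (if j = k then E else 1)) * normal_density 0 (sqrt 2 * \<zeta>) (\<theta> j))"
      by (rule prod_mono) (use nd_le_wide[OF assms(2)] in auto)
    have "normal_density 0 \<eta> \<rho> * (\<Prod>i<k. normal_density 0 \<zeta> (\<theta> i)) \<le>
      (sqrt 2 * E * normal_density 0 (sqrt 2 * \<eta>) \<rho>) * (sqrt 2 ^ k * (\<Prod>j<k. normal_density 0 (sqrt 2 * \<zeta>) (\<theta> j)))"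
      using mult_mono[OF r p] prodh[of k] E0 by (simp add: prod_nonneg)
    then show ?thesis unfolding E_def[symmetric] by (simp add: algebra_simps)
  qed
qed

lemma powr_big:
  fixes d M :: real
  assumes "d > 0"
  shows "eventually (\<lambda>n::nat. real n powr d \<ge> M) at_top"
proof -
  define N where "N = nat \<lceil>(max 1 M) powr (1/d)\<rceil>"
  show ?thesis unfolding eventually_at_top_linorder
  proof (intro exI allI impI)
    fix n assume "n \<ge> N"
    then have n: "real n \<ge> (max 1 M) powr (1/d)" unfolding N_def by linarith
    have "M \<le> max 1 M" by simp
    also have "\<dots> = ((max 1 M) powr (1/d)) powr d" using assms by (simp add: powr_powr)
    also have "\<dots> \<le> real n powr d" using n assms by (intro powr_mono2) auto
    finally show "M \<le> real n powr d" .
  qed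
qed

theorem lemma20:
  fixes a b \<eta> \<zeta> \<kappa> :: real and K :: "nat \<Rightarrow> nat"
  assumes "0 < a" "a < 1/2" "a + 1/2 < b" "b < 1"
    and "(\<lambda>n. real (K n)) \<sim>[at_top] (\<lambda>n. real n powr a)"
    and "\<eta> > 0" "\<zeta> > 0" "\<kappa> > 0"
  shows "eventually (\<lambda>n.
     (LINT \<omega> : space (param_space (K n)) - sieve a b (K n) n | param_space (K n).
        prior_density (K n) \<eta> \<zeta> \<omega>) \<le> exp (- real n * \<kappa>)) at_top"
proof -
  define S where "S = max \<eta> \<zeta>"
  have S0: "S > 0" unfolding S_def using assms by simp
  define M where "M = 4 * S^2 * (5/2 + \<kappa>)"
  have ev1: "eventually (\<lambda>n. norm (real (K n)) \<le> 3/2 * norm (real n powr a)) at_top"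
    using asymp_equiv_imp_eventually_le[OF assms(5), of "3/2"] by simp
  have ev2: "eventually (\<lambda>n. real n powr (2*(b-a)-1) \<ge> M) at_top"
    by (rule powr_big) (use assms in auto)
  have ev3: "eventually (\<lambda>n::nat. n \<ge> 1) at_top" by (rule eventually_ge_at_top)
  show ?thesis using ev1 ev2 ev3
  proof eventually_elim
    case (elim n)
    define k where "k = K n"
    define t where "t = real n powr (b-a)"
    define B where "B = sqrt 2 ^ (k+1) * exp (- (t^2) / (4 * S^2))"
    have n1: "real n \<ge> 1" using elim(3) by simp
    have t0: "t \<ge> 0" unfolding t_def by simp
    have B0: "B \<ge> 0" unfolding B_def by simp
    have B_le: "B \<le> exp (- real n * \<kappa>)"
    proof -
      have "real n powr a \<le> real n powr 1" using n1 assms by (intro powr_mono) auto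
      then have Kle: "real k \<le> 3/2 * real n" using elim(1) n1 unfolding k_def by simp
      have "t^2 = real n powr (2*(b-a))" unfolding t_def
        by (simp add: power2_eq_square powr_add[symmetric])
      also have "\<dots> = real n * real n powr (2*(b-a)-1)"
      proof -
        have "real n * real n powr (2*(b-a)-1) = real n powr 1 * real n powr (2*(b-a)-1)" using n1 by simp
        also have "\<dots> = real n powr (1 + (2*(b-a)-1))" by (rule powr_add[symmetric])
        finally show ?thesis by simp
      qed
      finally have "t^2 \<ge> real n * M" using elim(2) n1 by (simp add: mult_left_mono)
      then have "t^2 / (4 * S^2) \<ge> real n * M / (4 * S^2)" using S0 by (intro divide_right_mono) auto
      also have "real n * M / (4 * S^2) = (5/2 + \<kappa>) * real n" unfolding M_def using S0 by simp
      finally have tb: "t^2 / (4 * S^2) \<ge> (5/2 + \<kappa>) * real n" .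
      have s2: "sqrt 2 \<le> exp 1"
      proof -
        have "sqrt 2 \<le> sqrt 4" by (simp only: real_sqrt_le_iff)
        also have "sqrt 4 = (2::real)" by simp
        also have "(2::real) \<le> exp 1" using exp_ge_add_one_self[of 1] by simp
        finally show ?thesis .
      qed
      have "sqrt 2 ^ (k+1) \<le> exp 1 ^ (k+1)" by (rule power_mono[OF s2]) simp
      also have "\<dots> = exp (real (k+1))" by (metis exp_of_nat_mult mult.right_neutral)
      finally have "B \<le> exp (real (k+1)) * exp (- (t^2) / (4 * S^2))" unfolding B_def
        by (intro mult_right_mono) auto
      also have "\<dots> = exp (real (k+1) - t^2 / (4 * S^2))" by (simp add: exp_add[symmetric])
      also have "\<dots> \<le> exp (- real n * \<kappa>)"
      proof -
        have tb': "5/2 * real n + real n * \<kappa> \<le> t^2 / (4 * S^2)" using tb by (simp add: algebra_simps)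
        have "real (k+1) - t^2 / (4 * S^2) \<le> - real n * \<kappa>" using Kle tb' n1 by simp
        then show ?thesis by simp
      qed
      finally show ?thesis .
    qed
    have int_le: "(LINT \<omega> : space (param_space k) - sieve a b k n | param_space k.
        prior_density k \<eta> \<zeta> \<omega>) \<le> B"
    proof -
      let ?A = "space (param_space k) - sieve a b k n"
      let ?f = "\<lambda>\<omega>. indicator ?A \<omega> *\<^sub>R prior_density k \<eta> \<zeta> \<omega>"
      let ?g = "\<lambda>\<omega>. normal_density 0 (sqrt 2 * \<eta>) (snd \<omega>) * (\<Prod>i<k. normal_density 0 (sqrt 2 * \<zeta>) (fst \<omega> i))"
      have fnn: "0 \<le> ?f \<omega>" for \<omega> unfolding prior_density_def by (simp add: prod_nonneg)
      have pw: "?f \<omega> \<le> B * ?g \<omega>" for \<omega>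
      proof (cases "\<omega> \<in> ?A")
        case True
        obtain \<theta> \<rho> where w: "\<omega> = (\<theta>, \<rho>)" by fastforce
        have "\<not> ((\<forall>i<k. \<bar>\<theta> i\<bar> \<le> exp t) \<and> \<bar>\<rho>\<bar> \<le> t)"
          using True unfolding w sieve_def C_seq_def t_def by auto
        from pointwise[OF assms(6,7) t0 this]
        show ?thesis using True unfolding w prior_density_def B_def S_def by (simp add: mult.assoc)
      next
        case False
        then show ?thesis using B0 by (simp add: prod_nonneg)
      qed
      show ?thesis
      proof (cases "integrable (param_space k) ?f")
        case True
        have "integral\<^sup>L (param_space k) ?f = enn2real (\<integral>\<^sup>+ \<omega>. ennreal (?f \<omega>) \<partial>param_space k)"
          by (rule integral_eq_nn_integral) (use True fnn in auto)
        also have "\<dots> \<le> B"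
        proof (rule enn2real_leI[OF B0])
          have "(\<integral>\<^sup>+ \<omega>. ennreal (?f \<omega>) \<partial>param_space k) \<le> (\<integral>\<^sup>+ \<omega>. ennreal B * ennreal (?g \<omega>) \<partial>param_space k)"
            by (rule nn_integral_mono) (use pw B0 in \<open>simp add: ennreal_mult[symmetric] prod_nonneg\<close>)
          also have "\<dots> = ennreal B * (\<integral>\<^sup>+ \<omega>. ennreal (?g \<omega>) \<partial>param_space k)"
            by (rule nn_integral_cmult) (simp add: param_space_def)
          also have "\<dots> = ennreal B" unfolding param_space_def using nn_g[of "sqrt 2 * \<eta>" "sqrt 2 * \<zeta>" k] assms by simp
          finally show "(\<integral>\<^sup>+ \<omega>. ennreal (?f \<omega>) \<partial>param_space k) \<le> ennreal B" .
        qed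
        finally show ?thesis unfolding set_lebesgue_integral_def .
      next
        case False
        then show ?thesis unfolding set_lebesgue_integral_def using B0
          by (simp add: not_integrable_integral_eq)
      qed
    qed
    show ?case using int_le B_le unfolding k_def by linarith
  qed
qed

end
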